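(* Let $n,d\in\mathbf{N}$ and let $\overline{F},\overline{G}:\mathbf{N}^d\to\mathbf{Z}_+$ be order-reversing functions such that $\overline{F}_{\mathbf{a}}=\overline{G}_{\mathbf{a}}=0$ for every upper boundary point $\mathbf{a}$ of $[n]^d$. Let $F:=\overline{F}|_{[n]^d}$ and $G:=\overline{G}|_{[n]^d}$. Then \[d_{\mathrm{I}}(\overline{F},\overline{G})=\min\{k\in\{0,1,\dots,n-1\}:\text{the $k$-test for $(F,G)$ returns "Yes"}\}.\]
   Context: $\mathbf{N}=\{1,2,\dots\}$ with the product order on $\mathbf{N}^d$; $[n]=\{1,\dots,n\}$ and $[n]^d\subseteq\mathbf{N}^d$. A point $\mathbf{a}=(a_1,\dots,a_d)\in[n]^d$ is an upper boundary point of $[n]^d$ if $a_i=n$ for some $i$. Order-reversing means $\mathbf{a}\le\mathbf{b}\Rightarrow \overline{F}_{\mathbf{a}}\ge\overline{F}_{\mathbf{b}}$. The interleaving distance between order-reversing $\overline{F},\overline{G}:\mathbf{N}^d\to\mathbf{Z}_+$ (regarded as functors into the poset $\mathbf{Z}_+^{\mathrm{op}}$) is $d_{\mathrm{I}}(\overline{F},\overline{G}):=\inf\{k\in\mathbf{Z}_+:\forall\mathbf{a}\in\mathbf{N}^d,\ \overline{F}_{\mathbf{a}}\ge\overline{G}_{\mathbf{a}+k(1,\dots,1)}\text{ and }\overline{G}_{\mathbf{a}}\ge\overline{F}_{\mathbf{a}+k(1,\dots,1)}\}$. For $F:[n]^d\to\mathbf{Z}_+$ and $k\in\{0,\dots,n-1\}$,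 the lower-left block $F|_{[n-k]^d}$ is the restriction to $[n-k]^d$ and the upper-right block $F|^{[n-k]^d}:[n-k]^d\to\mathbf{Z}_+$ is $\mathbf{a}\mapsto F_{\mathbf{a}+k(1,\dots,1)}$. For functions $H,K$ on the same domain, $H\ge K$ means pointwise. The $k$-test for $(F,G)$ returns "Yes" iff $F|_{[n-k]^d}\ge G|^{[n-k]^d}$ and $G|_{[n-k]^d}\ge F|^{[n-k]^d}$, and "No" otherwise. *)

theory Defs
  imports Main
begin

text \<open>Points of N^d (N = {1,2,...}) are functions from a finite index type 'd
  (with CARD('d) = d >= 1) to nat with all coordinates >= 1. Z_+ is nat.\<close>

definition Npt :: "('d \<Rightarrow> nat) \<Rightarrow> bool" where
  "Npt a \<longleftrightarrow> (\<forall>i. 1 \<le> a i)"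

definition in_grid :: "nat \<Rightarrow> ('d \<Rightarrow> nat) \<Rightarrow> bool" where
  "in_grid n a \<longleftrightarrow> (\<forall>i. 1 \<le> a i \<and> a i \<le> n)"

definition upper_boundary :: "nat \<Rightarrow> ('d \<Rightarrow> nat) \<Rightarrow> bool" where
  "upper_boundary n a \<longleftrightarrow> in_grid n a \<and> (\<exists>i. a i = n)"

definition shift :: "('d \<Rightarrow> nat) \<Rightarrow> nat \<Rightarrow> ('d \<Rightarrow> nat)" where
  "shift a k = (\<lambda>i. a i + k)"

definition order_reversing :: "(('d \<Rightarrow> nat) \<Rightarrow> nat) \<Rightarrow> bool" where
  "order_reversing F \<longleftrightarrow>
     (\<forall>a b. Npt a \<longrightarrow> Npt b \<longrightarrow> a \<le> b \<longrightarrow> F b \<le> F a)"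

definition interleaving_dist ::
  "(('d \<Rightarrow> nat) \<Rightarrow> nat) \<Rightarrow> (('d \<Rightarrow> nat) \<Rightarrow> nat) \<Rightarrow> nat" where
  "interleaving_dist F G =
     Inf {k. \<forall>a. Npt a \<longrightarrow> F a \<ge> G (shift a k) \<and> G a \<ge> F (shift a k)}"

definition grid_restrict :: "nat \<Rightarrow> (('d \<Rightarrow> nat) \<Rightarrow> nat) \<Rightarrow> (('d \<Rightarrow> nat) \<Rightarrow> nat)" where
  "grid_restrict n F = (\<lambda>a. if in_grid n a then F a else undefined)"

definition lower_left :: "nat \<Rightarrow> nat \<Rightarrow> (('d \<Rightarrow> nat) \<Rightarrow> nat) \<Rightarrow> (('d \<Rightarrow> nat) \<Rightarrow> nat)" where
  "lower_left n k F = (\<lambda>a. if in_grid (n - k) a then F a else undefined)"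

definition upper_right :: "nat \<Rightarrow> nat \<Rightarrow> (('d \<Rightarrow> nat) \<Rightarrow> nat) \<Rightarrow> (('d \<Rightarrow> nat) \<Rightarrow> nat)" where
  "upper_right n k F = (\<lambda>a. if in_grid (n - k) a then F (shift a k) else undefined)"

definition ge_on_grid :: "nat \<Rightarrow> (('d \<Rightarrow> nat) \<Rightarrow> nat) \<Rightarrow> (('d \<Rightarrow> nat) \<Rightarrow> nat) \<Rightarrow> bool" where
  "ge_on_grid m H K \<longleftrightarrow> (\<forall>a. in_grid m a \<longrightarrow> H a \<ge> K a)"

definition k_test :: "nat \<Rightarrow> nat \<Rightarrow> (('d \<Rightarrow> nat) \<Rightarrow> nat) \<Rightarrow> (('d \<Rightarrow> nat) \<Rightarrow> nat) \<Rightarrow> bool" where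
  "k_test n k F G \<longleftrightarrow>
     ge_on_grid (n - k) (lower_left n k F) (upper_right n k G) \<and>
     ge_on_grid (n - k) (lower_left n k G) (upper_right n k F)"

end

theory Submission
  imports Defs
begin

lemma zero_outside:
  fixes F :: "('d::finite \<Rightarrow> nat) \<Rightarrow> nat"
  assumes n: "1 \<le> n" and ord: "order_reversing F"
    and ub: "\<And>a. upper_boundary n a \<Longrightarrow> F a = 0"
    and a: "Npt a" and i: "n \<le> a i"
  shows "F a = 0"
proof -
  define b where "b = (\<lambda>j. min (a j) n)"
  have g: "in_grid n b" using a n unfolding b_def in_grid_def Npt_def by auto
  have "b i = n" using i unfolding b_def by auto
  hence ubb: "upper_boundary n b" using g unfolding upper_boundary_def by auto
  have "Npt b" using g unfolding in_grid_def Npt_def by auto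
  moreover have "b \<le> a" unfolding b_def le_fun_def by auto
  ultimately have "F a \<le> F b" using ord a unfolding order_reversing_def by blast
  thus ?thesis using ub[OF ubb] by simp
qed

lemma equiv_test:
  fixes F G :: "('d::finite \<Rightarrow> nat) \<Rightarrow> nat"
  assumes n: "1 \<le> n" and oF: "order_reversing F" and oG: "order_reversing G"
    and ub: "\<And>a. upper_boundary n a \<Longrightarrow> F a = 0 \<and> G a = 0"
    and k: "k < n"
  shows "(\<forall>a. Npt a \<longrightarrow> F a \<ge> G (shift a k) \<and> G a \<ge> F (shift a k))
     \<longleftrightarrow> k_test n k (grid_restrict n F) (grid_restrict n G)"
proof
  assume H: "\<forall>a. Npt a \<longrightarrow> F a \<ge> G (shift a k) \<and> G a \<ge> F (shift a k)"
  have "F a \<ge> G (shift a k) \<and> G a \<ge> F (shift a k)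
        \<and> in_grid n a \<and> in_grid n (shift a k)" if "in_grid (n - k) a" for a
  proof -
    have "Npt a" using that unfolding in_grid_def Npt_def by auto
    moreover have "in_grid n a" "in_grid n (shift a k)"
      using that k unfolding in_grid_def shift_def by (metis add_le_mono1 le_add_diff_inverse2 le_trans less_imp_le trans_le_add1 diff_le_self)+
    ultimately show ?thesis using H by auto
  qed
  thus "k_test n k (grid_restrict n F) (grid_restrict n G)"
    unfolding k_test_def ge_on_grid_def lower_left_def upper_right_def grid_restrict_def
    by auto
next
  assume T: "k_test n k (grid_restrict n F) (grid_restrict n G)"
  show "\<forall>a. Npt a \<longrightarrow> F a \<ge> G (shift a k) \<and> G a \<ge> F (shift a k)"
  proof (intro allI impI)
    fix a :: "'d \<Rightarrow> nat" assume a: "Npt a"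
    show "F a \<ge> G (shift a k) \<and> G a \<ge> F (shift a k)"
    proof (cases "in_grid (n - k) a")
      case True
      have "in_grid n a" "in_grid n (shift a k)"
        using True k unfolding in_grid_def shift_def by (metis add_le_mono1 le_add_diff_inverse2 le_trans less_imp_le trans_le_add1 diff_le_self)+
      thus ?thesis using T True
        unfolding k_test_def ge_on_grid_def lower_left_def upper_right_def grid_restrict_def
        by (smt (verit))
    next
      case False
      then obtain i where "a i > n - k" using a unfolding in_grid_def Npt_def using not_le by blast
      hence i: "n \<le> shift a k i" unfolding shift_def using k by auto
      have s: "Npt (shift a k)" using a unfolding Npt_def shift_def by (meson trans_le_add1)
      have "F (shift a k) = 0" "G (shift a k) = 0"
        using zero_outside[OF n oF _ s i] zero_outside[OF n oG _ s i] ub by auto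
      thus ?thesis by simp
    qed
  qed
qed

theorem proposition5p3:
  fixes Fbar Gbar :: "('d::finite \<Rightarrow> nat) \<Rightarrow> nat" and n :: nat
  assumes "1 \<le> n"
    and "order_reversing Fbar" and "order_reversing Gbar"
    and "\<And>a. upper_boundary n a \<Longrightarrow> Fbar a = 0 \<and> Gbar a = 0"
  shows "interleaving_dist Fbar Gbar
           = Min {k \<in> {0..<n}. k_test n k (grid_restrict n Fbar) (grid_restrict n Gbar)}"
proof -
  define S where "S = {k. \<forall>a. Npt a \<longrightarrow> Fbar a \<ge> Gbar (shift a k) \<and> Gbar a \<ge> Fbar (shift a k)}"
  define T where "T = {k \<in> {0..<n}. k_test n k (grid_restrict n Fbar) (grid_restrict n Gbar)}"
  have ST: "T = S \<inter> {0..<n}"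
    unfolding S_def T_def using equiv_test[OF assms] by auto
  have "n - 1 \<in> S"
  proof -
    have "Fbar (shift a (n-1)) = 0 \<and> Gbar (shift a (n-1)) = 0" if a: "Npt a" for a :: "'d \<Rightarrow> nat"
    proof -
      obtain i :: 'd where True by simp
      have s: "Npt (shift a (n-1))" using a unfolding Npt_def shift_def by (meson trans_le_add1)
      have i: "n \<le> shift a (n-1) i" using a unfolding Npt_def shift_def by (metis le_add_diff_inverse2 assms(1) add_le_mono1 add.commute)
      show ?thesis using zero_outside[OF assms(1) assms(2) _ s i] zero_outside[OF assms(1) assms(3) _ s i] assms(4) by auto
    qed
    thus ?thesis unfolding S_def by auto
  qed
  hence m: "Inf S \<in> S" "Inf S \<le> n - 1" by (auto intro: Inf_nat_def1 cInf_lower)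
  hence mT: "Inf S \<in> T" using ST assms(1) by auto
  have fin: "finite T" unfolding T_def by auto
  have "Min T = Inf S"
  proof (rule Min_eqI[OF fin])
    show "y \<ge> Inf S" if "y \<in> T" for y using that ST by (auto intro: cInf_lower)
  qed (rule mT)
  thus ?thesis unfolding interleaving_dist_def S_def T_def by simp
qed

end
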